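(* Let $p$ be a prime, $\beta\ge1$ and $\alpha_1,\dots,\alpha_n\ge1$, and put $\alpha_{\max}=\max_j\alpha_j$. Every polyfract $P\in\mathbb{Z}_{p^\beta}\binom{X_1,\dots,X_n}{\mathbb{Z}_{p^{\alpha_1}}\times\cdots\times\mathbb{Z}_{p^{\alpha_n}}}$ satisfies $$\deg(P)\le\deg\Big(\binom{0}{X_1}_{p^{\alpha_1},p^\beta}\cdots\binom{0}{X_n}_{p^{\alpha_n},p^\beta}\Big)=\sum_{j=1}^n p^{\alpha_j}-n+(\beta-1)(p-1)p^{\alpha_{\max}-1},$$ and this bound is attained (by the product of Lagrange functions shown).
   Context: $\mathbb{Z}_r=\mathbb{Z}/r\mathbb{Z}$; $\binom{X}{\delta}=X(X-1)\cdots(X-\delta+1)/\delta!$, $\binom{X}{0}=1$. A $\mathbb{Z}_{r}$-polyfract in $X_1,\dots,X_n$ is a formal finite sum $P=\sum_{\delta\in\mathbb{N}^n}P_\delta\prod_j\binom{X_j}{\delta_j}$, $P_\delta\in\mathbb{Z}_r$, evaluated at $x\in\mathbb{Z}^n$ in $\mathbb{Z}_r$ in the obvious way; its (total) degree is $\max\{\delta_1+\cdots+\delta_n:P_\delta\ne0\}$. Distinct polyfracts give distinct maps $\mathbb{Z}^n\to\mathbb{Z}_r$, so a map is identified with the polyfract representing it. $\mathbb{Z}_r\binom{X_1,\dots,X_n}{\mathbb{Z}_{q_1}\times\cdots\times\mathbb{Z}_{q_n}}$ is the set of polyfracts whose map is $q_j$-periodic in the $j$-th variable. For $q,r\ge1$,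 $\binom{0}{X}_{q,r}$ denotes the Lagrange function $\mathbb{Z}\to\mathbb{Z}_r$ taking value $1$ at $x\equiv0\pmod q$ and $0$ otherwise (it is represented by a polyfract when $q,r$ are powers of the same prime), and the product above is the function $x\mapsto\prod_j\binom{0}{x_j}_{p^{\alpha_j},p^\beta}$. *)

theory Defs
  imports Complex_Main "HOL-Computational_Algebra.Primes"
begin

text \<open>A Z_r-polyfract in the variables X_0,...,X_(n-1) is represented by its
coefficient function c, mapping a multi-index delta (a function nat => nat
vanishing outside {0..<n}) to a coefficient in Z_r, represented canonically
as an integer in {0..<r}; only finitely many coefficients are nonzero.\<close>

definition is_polyfract :: "nat \<Rightarrow> int \<Rightarrow> ((nat \<Rightarrow> nat) \<Rightarrow> int) \<Rightarrow> bool" where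
  "is_polyfract n r c \<longleftrightarrow>
     (\<forall>\<delta>. 0 \<le> c \<delta> \<and> c \<delta> < r) \<and>
     finite {\<delta>. c \<delta> \<noteq> 0} \<and>
     (\<forall>\<delta>. c \<delta> \<noteq> 0 \<longrightarrow> (\<forall>j\<ge>n. \<delta> j = 0))"

text \<open>Binomial coefficient X(X-1)...(X-k+1)/k! at an integer X; computed in the
rationals, the value is an integer, which we extract with floor.\<close>

definition int_binom :: "int \<Rightarrow> nat \<Rightarrow> int" where
  "int_binom x k = \<lfloor>(of_int x :: rat) gchoose k\<rfloor>"

definition pf_eval :: "nat \<Rightarrow> int \<Rightarrow> ((nat \<Rightarrow> nat) \<Rightarrow> int) \<Rightarrow> (nat \<Rightarrow> int) \<Rightarrow> int" where
  "pf_eval n r c x =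
     (\<Sum>\<delta>\<in>{\<delta>. c \<delta> \<noteq> 0}. c \<delta> * (\<Prod>j<n. int_binom (x j) (\<delta> j))) mod r"

definition pf_periodic ::
  "nat \<Rightarrow> int \<Rightarrow> (nat \<Rightarrow> int) \<Rightarrow> ((nat \<Rightarrow> nat) \<Rightarrow> int) \<Rightarrow> bool" where
  "pf_periodic n r q c \<longleftrightarrow>
     (\<forall>x j. j < n \<longrightarrow> pf_eval n r c (x(j := x j + q j)) = pf_eval n r c x)"

text \<open>Total degree (the zero polyfract gets degree 0 by convention).\<close>

definition pf_degree :: "nat \<Rightarrow> ((nat \<Rightarrow> nat) \<Rightarrow> int) \<Rightarrow> nat" where
  "pf_degree n c = Max (insert 0 ((\<lambda>\<delta>. \<Sum>j<n. \<delta> j) ` {\<delta>. c \<delta> \<noteq> 0}))"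

text \<open>Product of the Lagrange functions binom(0, x_j)_{q_j, r}, with values in {0,1}.\<close>

definition lagrange_prod :: "nat \<Rightarrow> (nat \<Rightarrow> int) \<Rightarrow> (nat \<Rightarrow> int) \<Rightarrow> int" where
  "lagrange_prod n q x = (\<Prod>j<n. if q j dvd x j then 1 else 0)"

end

theory Submission
  imports Defs
begin


lemma int_binom_rat: "of_int (int_binom x k) = (of_int x :: rat) gchoose k"
proof (cases "x \<ge> 0")
  case True
  define m where "m = nat x"
  have m: "x = int m" using True unfolding m_def by simp
  have "(of_int x :: rat) gchoose k = of_int (int (m choose k))"
    using m binomial_gbinomial[of m k, where 'a=rat] by simp
  then show ?thesis unfolding int_binom_def by simp
next
  case False
  define m where "m = nat (int k - x - 1)"
  have m: "int m = int k - x - 1" using False unfolding m_def by simp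
  have "(of_int x :: rat) gchoose k = (-1)^k * (of_nat k - of_int x - 1 gchoose k)"
    by (rule gbinomial_negated_upper)
  also have "of_nat k - of_int x - 1 = (of_nat m :: rat)"
    using arg_cong[OF m, of "of_int :: int \<Rightarrow> rat"] by simp
  also have "(-1)^k * (of_nat m gchoose k) = (of_int ((-1)^k * int (m choose k)) :: rat)"
    using binomial_gbinomial[of m k, where 'a=rat] by simp
  finally show ?thesis unfolding int_binom_def by simp
qed

lemma int_binom_nat: "int_binom (int m) k = int (m choose k)"
proof -
  have "(of_int (int_binom (int m) k) :: rat) = of_int (int (m choose k))"
    using int_binom_rat[of "int m" k] binomial_gbinomial[of m k, where 'a=rat] by simp
  then show ?thesis by (simp only: of_int_eq_iff)
qed

lemma int_binom_0[simp]: "int_binom x 0 = 1"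
  unfolding int_binom_def by simp

lemma int_binom_Suc: "int_binom (x+1) (Suc k) = int_binom x k + int_binom x (Suc k)"
proof -
  have "(of_int (int_binom (x+1) (Suc k)) :: rat) = of_int (int_binom x k + int_binom x (Suc k))"
    using int_binom_rat gbinomial_Suc_Suc[of "of_int x :: rat" k] by simp
  then show ?thesis by (simp only: of_int_eq_iff)
qed

primrec fd :: "(int \<Rightarrow> int) \<Rightarrow> nat \<Rightarrow> int \<Rightarrow> int" where
  "fd u 0 x = u x"
| "fd u (Suc k) x = fd u k (x+1) - fd u k x"

lemma pascal_sum:
  "(\<Sum>i\<le>m. int (m choose i) * a i) + (\<Sum>i\<le>m. int (m choose i) * a (Suc i))
   = (\<Sum>i\<le>Suc m. int (Suc m choose i) * a i)"
proof -
  have e1: "(\<Sum>i\<le>Suc m. int (Suc m choose i) * a i)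
      = a 0 + (\<Sum>i\<le>m. int (Suc m choose Suc i) * a (Suc i))"
    by (subst sum.atMost_Suc_shift) simp
  have e2: "(\<Sum>i\<le>m. int (Suc m choose Suc i) * a (Suc i)) = (\<Sum>i\<le>m. int (m choose i) * a (Suc i)) + (\<Sum>i\<le>m. int (m choose Suc i) * a (Suc i))"
    by (simp only: binomial_Suc_Suc of_nat_add distrib_right sum.distrib)
  have e3: "a 0 + (\<Sum>i\<le>m. int (m choose Suc i) * a (Suc i)) = (\<Sum>i\<le>Suc m. int (m choose i) * a i)"
    by (subst sum.atMost_Suc_shift) simp
  have e4: "(\<Sum>i\<le>Suc m. int (m choose i) * a i) = (\<Sum>i\<le>m. int (m choose i) * a i)"
    by simp
  show ?thesis using e1 e2 e3 e4 by linarith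
qed

lemma newton: "u (x + int m) = (\<Sum>i\<le>m. int (m choose i) * fd u i x)"
proof (induction m arbitrary: x)
  case 0
  then show ?case by simp
next
  case (Suc m)
  have "u (x + int (Suc m)) = u ((x+1) + int m)" by (simp add: algebra_simps)
  also have "\<dots> = (\<Sum>i\<le>m. int (m choose i) * fd u i (x+1))" by (rule Suc)
  also have "\<dots> = (\<Sum>i\<le>m. int (m choose i) * fd u i x + int (m choose i) * fd u (Suc i) x)"
    by (rule sum.cong) (simp_all add: distrib_left[symmetric])
  also have "\<dots> = (\<Sum>i\<le>m. int (m choose i) * fd u i x) + (\<Sum>i\<le>m. int (m choose i) * fd u (Suc i) x)"
    by (rule sum.distrib)
  also have "\<dots> = (\<Sum>i\<le>Suc m. int (Suc m choose i) * fd u i x)"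
    by (rule pascal_sum)
  finally show ?case .
qed

lemma fd_periodic: "(\<And>y. u (y + q) = u y) \<Longrightarrow> fd u k (x + q) = fd u k x"
proof (induction k arbitrary: x)
  case 0 then show ?case by simp
next
  case (Suc k)
  have "fd u k (x + q + 1) = fd u k ((x + 1) + q)" by (simp only: ac_simps)
  then show ?case using Suc by simp
qed

lemma fd_fd: "fd (fd u k) i x = fd u (i + k) x"
  by (induction i arbitrary: x) simp_all

lemma recur_full:
  assumes per: "\<And>y. h (y + int q) = h y"
  shows "fd h k 0 = (\<Sum>i\<le>q. int (q choose i) * fd h (k+i) 0)"
proof -
  have "fd h k (0 + int q) = (\<Sum>i\<le>q. int (q choose i) * fd (fd h k) i 0)" by (rule newton)
  also have "\<dots> = (\<Sum>i\<le>q. int (q choose i) * fd h (k+i) 0)" by (simp add: fd_fd add.commute)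
  finally show ?thesis using fd_periodic[of h "int q" k 0, OF per] by simp
qed

lemma sum_split_ends:
  fixes q :: nat assumes "q \<ge> 1"
  shows "(\<Sum>i\<le>q. g i) = g 0 + (\<Sum>i\<in>{1..<q}. g i) + (g q :: int)"
proof -
  obtain q' where q: "q = Suc q'" using assms by (cases q) auto
  have "(\<Sum>i\<le>q. g i) = g 0 + (\<Sum>i\<le>q'. g (Suc i))" unfolding q by (rule sum.atMost_Suc_shift)
  also have "(\<Sum>i\<le>q'. g (Suc i)) = (\<Sum>i<q'. g (Suc i)) + g q" unfolding q by (subst lessThan_Suc_atMost[symmetric]) (rule sum.lessThan_Suc)
  also have "(\<Sum>i<q'. g (Suc i)) = (\<Sum>i\<in>{1..<q}. g i)"
    unfolding q using sum.shift_bounds_Suc_ivl[of g 0 q'] by (simp add: atLeast0LessThan)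
  finally show ?thesis by simp
qed

lemma recur:
  assumes per: "\<And>y. h (y + int q) = h y" and q: "q \<ge> 1"
  shows "fd h (k+q) 0 = - (\<Sum>i\<in>{1..<q}. int (q choose i) * fd h (k+i) 0)"
  using recur_full[of h q k, OF per] sum_split_ends[OF q, of "\<lambda>i. int (q choose i) * fd h (k+i) 0"] by simp




lemma binom_key:
  fixes q i :: nat assumes "0 < i" "q \<ge> 1"
  shows "q * ((q-1) choose (i-1)) = (q choose i) * i"
  using Suc_times_binomial_eq[of "q-1" "i-1"] assms by simp

lemma F1:
  fixes p :: nat assumes p: "prime p" and i: "0 < i" "i < p^a"
  shows "p dvd (p^a choose i)"
proof (rule ccontr)
  assume nd: "\<not> p dvd (p^a choose i)"
  have "coprime (p^a) (p^a choose i)"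
    using prime_imp_coprime[OF p nd] by simp
  moreover have "p^a dvd (p^a choose i) * i"
  proof -
    have e: "p^a * ((p^a-1) choose (i-1)) = (p^a choose i) * i"
      using binom_key[of i "p^a"] i by simp
    show ?thesis by (metis e dvd_triv_left)
  qed
  ultimately have "p^a dvd i" using coprime_dvd_mult_right_iff by blast
  then show False using i by (simp add: nat_dvd_not_less)
qed

lemma F2:
  fixes p :: nat assumes p: "prime p" and a: "a \<ge> 1"
    and i: "(p-1)*p^(a-1) < i" "i < p^a"
  shows "p^2 dvd (p^a choose i)"
proof (rule ccontr)
  assume nd: "\<not> p^2 dvd (p^a choose i)"
  have ipos: "0 < i" using i by simp
  obtain w where w: "(p^a choose i) = p * w" using F1[OF p ipos i(2)] by blast
  have nw: "\<not> p dvd w" using nd w by (auto simp: power2_eq_square)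
  have pa: "p^a = p * p^(a-1)" using a by (simp add: power_eq_if)
  have "p * (p^(a-1) * ((p^a-1) choose (i-1))) = p * (w * i)"
  proof -
    have "p^a * ((p^a-1) choose (i-1)) = (p^a choose i) * i"
      using binom_key[of i "p^a"] ipos i by simp
    then show ?thesis using pa w by (simp add: mult.assoc)
  qed
  then have "p^(a-1) * ((p^a-1) choose (i-1)) = w * i"
    using prime_gt_0_nat[OF p] by simp
  then have "p^(a-1) dvd w * i" by (metis dvd_triv_left)
  moreover have "coprime (p^(a-1)) w" using prime_imp_coprime[OF p nw] by simp
  ultimately have "p^(a-1) dvd i" using coprime_dvd_mult_right_iff by blast
  then obtain t where t: "i = p^(a-1) * t" by blast
  have "p^(a-1) * t < p^(a-1) * p" using i(2) pa t by (simp add: mult.commute)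
  then have "t < p" by simp
  then have "t \<le> p - 1" by simp
  then have "i \<le> (p-1)*p^(a-1)" using t by (simp add: mult.commute)
  then show False using i by simp
qed

lemma F0:
  fixes p :: nat assumes p: "prime p" and j: "j < p^a"
  shows "int p dvd (int ((p^a - 1) choose j) - (-1)^j)"
  using j
proof (induction j)
  case 0 then show ?case by simp
next
  case (Suc j)
  have q: "p^a = Suc (p^a - 1)" using p by (simp add: prime_gt_0_nat)
  have e: "(p^a choose Suc j) = ((p^a - 1) choose j) + ((p^a-1) choose Suc j)"
    by (subst q) (simp only: binomial_Suc_Suc)
  have "p dvd (p^a choose Suc j)" using F1[OF p _ Suc.prems] by simp
  then have d1: "int p dvd int (p^a choose Suc j)" by simp
  have d2: "int p dvd (int ((p^a - 1) choose j) - (-1)^j)" using Suc by simp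
  have "int ((p^a - 1) choose Suc j) - (-1)^Suc j
        = int (p^a choose Suc j) - (int ((p^a - 1) choose j) - (-1)^j)"
    using e by simp
  then show ?case using d1 d2 by (metis dvd_diff)
qed

lemma not_dvd_pm1:
  fixes p :: nat assumes p: "prime p" and d: "int p dvd (X - (-1)^j)"
  shows "\<not> int p dvd X"
proof
  assume "int p dvd X"
  then have "int p dvd X - (X - (-1)^j)" using d by (rule dvd_diff)
  then have "int p dvd (-1)^j" by simp
  then have "int p dvd 1" by (cases "even j") auto
  then show False using prime_gt_1_nat[OF p] by simp
qed

lemma F3:
  fixes p :: nat assumes p: "prime p" and a: "a \<ge> 1"
  shows "\<exists>w. (p^a choose ((p-1)*p^(a-1))) = p * w \<and> \<not> p dvd w"
proof -
  define \<phi> where "\<phi> = (p-1)*p^(a-1)"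
  have p1: "p > 1" using prime_gt_1_nat[OF p] by simp
  have pa: "p^a = p * p^(a-1)" using a by (simp add: power_eq_if)
  have phipos: "0 < \<phi>" unfolding \<phi>_def using p1 by simp
  have philt: "\<phi> < p^a" unfolding \<phi>_def pa using p1 by simp
  obtain w where w: "(p^a choose \<phi>) = p * w" using F1[OF p phipos philt] by blast
  have "p^a * ((p^a-1) choose (\<phi>-1)) = (p^a choose \<phi>) * \<phi>"
    using binom_key[of \<phi> "p^a"] phipos p1 by simp
  then have "(p * p^(a-1)) * ((p^a-1) choose (\<phi>-1)) = (p * p^(a-1)) * (w * (p-1))"
    using pa w unfolding \<phi>_def by (simp add: ac_simps)
  then have X: "((p^a-1) choose (\<phi>-1)) = w * (p-1)"
    using p1 by simp
  have "int p dvd (int ((p^a - 1) choose (\<phi>-1)) - (-1)^(\<phi>-1))"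
    using F0[OF p, of "\<phi>-1" a] philt by simp
  then have "\<not> int p dvd int ((p^a - 1) choose (\<phi>-1))" by (rule not_dvd_pm1[OF p])
  then have "\<not> p dvd w" using X by (metis dvd_mult2 int_dvd_int_iff)
  then show ?thesis using w unfolding \<phi>_def by blast
qed




definition bv :: "nat \<Rightarrow> nat \<Rightarrow> nat \<Rightarrow> nat" where
  "bv q \<phi> k = (if k < q then 0 else (k - q) div \<phi> + 1)"

lemma bv_step:
  assumes phi: "0 < \<phi>" and j: "j \<le> c * \<phi>" "j \<le> K"
  shows "bv q \<phi> K \<le> bv q \<phi> (K - j) + c"
proof (cases "K < q")
  case True then show ?thesis by (simp add: bv_def)
next
  case False
  show ?thesis
  proof (cases "K - j < q")
    case True
    then have "K - q < c * \<phi>" using j False by linarith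
    then have "(K - q) div \<phi> < c" by (rule less_mult_imp_div_less)
    then show ?thesis using False by (simp add: bv_def)
  next
    case F2: False
    have "(K - q) div \<phi> \<le> ((K - j - q) + c * \<phi>) div \<phi>"
      using j F2 by (intro div_le_mono) linarith
    also have "\<dots> = c + (K - j - q) div \<phi>" using phi by simp
    finally show ?thesis using False F2 by (simp add: bv_def)
  qed
qed

lemma bv_ge:
  assumes phi: "0 < \<phi>" and K: "q + m * \<phi> \<le> K"
  shows "m + 1 \<le> bv q \<phi> K"
proof -
  have "m = (m * \<phi>) div \<phi>" using phi by simp
  also have "\<dots> \<le> (K - q) div \<phi>" using K by (intro div_le_mono) linarith
  finally show ?thesis using K by (simp add: bv_def)
qed

lemma q_le_2phi:
  fixes p :: nat assumes p: "prime p" and a: "a \<ge> 1"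
  shows "p^a \<le> 2 * ((p-1)*p^(a-1))" "0 < (p-1)*p^(a-1)" "(p-1)*p^(a-1) < p^a"
proof -
  have p1: "p > 1" using prime_gt_1_nat[OF p] by simp
  have pa: "p^a = p * p^(a-1)" using a by (simp add: power_eq_if)
  have "p \<le> 2 * (p-1)" using p1 by simp
  then have "p * p^(a-1) \<le> (2 * (p-1)) * p^(a-1)" by (rule mult_right_mono) simp
  then show "p^a \<le> 2 * ((p-1)*p^(a-1))" using pa by (simp add: mult.assoc)
  show "0 < (p-1)*p^(a-1)" using p1 by simp
  show "(p-1)*p^(a-1) < p^a" using p1 pa by simp
qed

lemma val_seq:
  fixes p a :: nat and s :: "nat \<Rightarrow> int"
  assumes p: "prime p" and a: "a \<ge> 1"
  and rec: "\<And>k. s (k + p^a) = - (\<Sum>i\<in>{1..<p^a}. int (p^a choose i) * s (k+i))"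
  shows "int p ^ bv (p^a) ((p-1)*p^(a-1)) K dvd s K"
proof (induction K rule: less_induct)
  case (less K)
  define q where "q = p^a"
  define \<phi> where "\<phi> = (p-1)*p^(a-1)"
  have q2: "q \<le> 2 * \<phi>" "0 < \<phi>" "\<phi> < q" using q_le_2phi[OF p a] unfolding q_def \<phi>_def by auto
  show ?case
  proof (cases "K < q")
    case True then show ?thesis by (simp add: bv_def q_def)
  next
    case False
    define k where "k = K - q"
    have K: "K = k + q" using False unfolding k_def by simp
    have sK: "s K = - (\<Sum>i\<in>{1..<q}. int (q choose i) * s (k+i))"
      unfolding K q_def by (rule rec)
    have "int p ^ bv q \<phi> K dvd (\<Sum>i\<in>{1..<q}. int (q choose i) * s (k+i))"
    proof (rule dvd_sum)
      fix i assume i: "i \<in> {1..<q}"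
      define j where "j = q - i"
      have j: "0 < j" "j < q" "k + i = K - j" "j \<le> K" using i K unfolding j_def by auto
      have bs: "(q choose i) = (q choose j)" unfolding j_def by (rule binomial_symmetric) (use i in simp)
      have IH: "int p ^ bv q \<phi> (K - j) dvd s (K - j)"
        using less[of "K - j"] j unfolding q_def \<phi>_def by simp
      show "int p ^ bv q \<phi> K dvd int (q choose i) * s (k+i)"
      proof (cases "j \<le> \<phi>")
        case True
        have "p dvd (q choose j)" using F1[OF p j(1)] j(2) unfolding q_def by simp
        then have d1: "int p dvd int (q choose i)" using bs by simp
        have "bv q \<phi> K \<le> bv q \<phi> (K - j) + 1" using bv_step[OF q2(2), of j 1 K] True j by simp
        then have "int p ^ bv q \<phi> K dvd int p ^ (bv q \<phi> (K - j) + 1)" by (rule le_imp_power_dvd)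
        also have "\<dots> = int p * int p ^ bv q \<phi> (K - j)" by simp
        also have "\<dots> dvd int (q choose i) * s (k+i)" using d1 IH j(3) by (simp add: mult_dvd_mono)
        finally show ?thesis .
      next
        case False
        have "p^2 dvd (q choose j)" using F2[OF p a, of j] False j(2) unfolding q_def \<phi>_def by simp
        then have d1: "int p ^ 2 dvd int (q choose i)" using bs
          by (metis of_nat_dvd_iff of_nat_power)
        have "bv q \<phi> K \<le> bv q \<phi> (K - j) + 2" using bv_step[OF q2(2), of j 2 K] q2 j by simp
        then have "int p ^ bv q \<phi> K dvd int p ^ (2 + bv q \<phi> (K - j))" by (intro le_imp_power_dvd) simp
        also have "\<dots> = int p ^ 2 * int p ^ bv q \<phi> (K - j)" by (rule power_add)
        also have "\<dots> dvd int (q choose i) * s (k+i)" using d1 IH j(3) by (simp add: mult_dvd_mono)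
        finally show ?thesis .
      qed
    qed
    then show ?thesis using sK unfolding q_def \<phi>_def by simp
  qed
qed




lemma exact_seq:
  fixes p a :: nat and s :: "nat \<Rightarrow> int"
  assumes p: "prime p" and a: "a \<ge> 1"
  and rec: "\<And>k. s (k + p^a) = - (\<Sum>i\<in>{1..<p^a}. int (p^a choose i) * s (k+i))"
  and base: "\<not> int p dvd s (p^a - 1)"
  shows "\<exists>u. s (p^a - 1 + m * ((p-1)*p^(a-1))) = int p ^ m * u \<and> \<not> int p dvd u"
proof (induction m)
  case 0 then show ?case using base by (intro exI[of _ "s (p^a - 1)"]) simp
next
  case (Suc m)
  define q where "q = p^a"
  define \<phi> where "\<phi> = (p-1)*p^(a-1)"
  have q2: "q \<le> 2 * \<phi>" "0 < \<phi>" "\<phi> < q" using q_le_2phi[OF p a] unfolding q_def \<phi>_def by auto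
  have pi: "prime (int p)" using p by (simp add: prime_nat_int_transfer)
  obtain u where u: "s (q - 1 + m * \<phi>) = int p ^ m * u" "\<not> int p dvd u"
    using Suc unfolding q_def \<phi>_def by blast
  obtain w where w: "(q choose \<phi>) = p * w" "\<not> p dvd w" using F3[OF p a] unfolding q_def \<phi>_def by blast
  define K where "K = q - 1 + Suc m * \<phi>"
  define k where "k = m * \<phi> + \<phi> - 1"
  have K: "K = k + q" unfolding K_def k_def using q2 by simp
  define i0 where "i0 = q - \<phi>"
  have i0: "i0 \<in> {1..<q}" unfolding i0_def using q2 by auto
  define T where "T i = int (q choose i) * s (k+i)" for i
  have sK: "s K = - (\<Sum>i\<in>{1..<q}. T i)"
    unfolding K q_def T_def by (rule rec)
  have sum_split: "(\<Sum>i\<in>{1..<q}. T i) = T i0 + (\<Sum>i\<in>{1..<q} - {i0}. T i)"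
    using i0 by (simp add: sum.remove)
  have Ti0: "T i0 = int p ^ Suc m * (int w * u)"
  proof -
    have "(q choose i0) = (q choose \<phi>)" unfolding i0_def
      using binomial_symmetric[of \<phi> q] q2 by simp
    moreover have "k + i0 = q - 1 + m * \<phi>" unfolding k_def i0_def using q2 by simp
    ultimately show ?thesis unfolding T_def using u w by (simp add: algebra_simps)
  qed
  have rest: "int p ^ (Suc (Suc m)) dvd (\<Sum>i\<in>{1..<q} - {i0}. T i)"
  proof (rule dvd_sum)
    fix i assume i: "i \<in> {1..<q} - {i0}"
    define j where "j = q - i"
    have j: "0 < j" "j < q" "k + i = K - j" "j \<noteq> \<phi>" using i K q2 unfolding j_def i0_def by auto
    have bs: "(q choose i) = (q choose j)" unfolding j_def by (rule binomial_symmetric) (use i in simp)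
    have V: "int p ^ bv q \<phi> (K - j) dvd s (K - j)"
      using val_seq[OF p a rec, of "K - j"] unfolding q_def \<phi>_def by simp
    show "int p ^ Suc (Suc m) dvd T i"
    proof (cases "j < \<phi>")
      case True
      have "p dvd (q choose j)" using F1[OF p j(1)] j(2) unfolding q_def by simp
      then have d1: "int p dvd int (q choose i)" using bs by simp
      have "q + m * \<phi> \<le> K - j" unfolding K_def using True q2 by simp
      then have "m + 1 \<le> bv q \<phi> (K - j)" by (rule bv_ge[OF q2(2)])
      then have "int p ^ (m+1) dvd s (K - j)" using V by (meson le_imp_power_dvd dvd_trans)
      then have "int p * int p ^ (m+1) dvd int (q choose i) * s (k+i)" using d1 j(3) by (simp add: mult_dvd_mono)
      then show ?thesis unfolding T_def by simp
    next
      case False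
      then have jg: "\<phi> < j" using j(4) by simp
      have "p^2 dvd (q choose j)" using F2[OF p a, of j] jg j(2) unfolding q_def \<phi>_def by simp
      then have d1: "int p ^ 2 dvd int (q choose i)" using bs
        by (metis of_nat_dvd_iff of_nat_power)
      have "int p ^ m dvd s (K - j)"
      proof (cases m)
        case 0 then show ?thesis by simp
      next
        case (Suc m')
        have "q + m' * \<phi> \<le> K - j" unfolding K_def using jg j(2) q2 Suc by simp
        then have "m' + 1 \<le> bv q \<phi> (K - j)" by (rule bv_ge[OF q2(2)])
        then have "int p ^ (m'+1) dvd s (K - j)" using V by (meson le_imp_power_dvd dvd_trans)
        then show ?thesis using Suc by simp
      qed
      then have "int p ^ 2 * int p ^ m dvd int (q choose i) * s (k+i)" using d1 j(3) by (simp add: mult_dvd_mono)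
      then show ?thesis unfolding T_def by (simp add: power_add[symmetric] add.commute)
    qed
  qed
  then obtain Y where Y: "(\<Sum>i\<in>{1..<q} - {i0}. T i) = int p ^ Suc (Suc m) * Y" by blast
  have "s K = int p ^ Suc m * (- (int w * u + int p * Y))"
    using sK sum_split Ti0 Y by (simp add: algebra_simps)
  moreover have "\<not> int p dvd (- (int w * u + int p * Y))"
  proof
    assume "int p dvd - (int w * u + int p * Y)"
    then have "int p dvd int w * u + int p * Y" by (simp only: dvd_minus_iff)
    then have "int p dvd int w * u" by (simp add: dvd_add_left_iff)
    then have "int p dvd int w \<or> int p dvd u" using pi by (simp add: prime_dvd_mult_iff)
    then show False using w(2) u(2) by simp
  qed
  ultimately show ?case unfolding K_def q_def \<phi>_def by blast
qed




lemma D1: "(\<Sum>l\<le>N. c l * int_binom (x+1) l) - (\<Sum>l\<le>N. c l * int_binom x l)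
          = (\<Sum>l<N. c (Suc l) * int_binom x l)"
proof (induction N)
  case 0 then show ?case by simp
next
  case (Suc N)
  have "(\<Sum>l\<le>Suc N. c l * int_binom (x+1) l) - (\<Sum>l\<le>Suc N. c l * int_binom x l)
      = ((\<Sum>l\<le>N. c l * int_binom (x+1) l) - (\<Sum>l\<le>N. c l * int_binom x l))
        + c (Suc N) * (int_binom (x+1) (Suc N) - int_binom x (Suc N))"
    by (simp add: algebra_simps)
  also have "\<dots> = (\<Sum>l<N. c (Suc l) * int_binom x l) + c (Suc N) * int_binom x N"
    using Suc by (simp add: int_binom_Suc)
  also have "\<dots> = (\<Sum>l<Suc N. c (Suc l) * int_binom x l)" by simp
  finally show ?case .
qed

lemma rep:
  fixes h :: "int \<Rightarrow> int" and q N :: nat and r :: int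
  assumes per: "\<And>y. h (y + int q) = h y" and q: "q \<ge> 1"
  and big: "\<And>k. N < k \<Longrightarrow> r dvd fd h k 0"
  shows "r dvd (h x - (\<Sum>l\<le>N. fd h l 0 * int_binom x l))"
proof -
  define s where "s l = fd h l 0" for l
  define s' where "s' l = (if l \<le> N then s l else 0)" for l
  define P where "P x = (\<Sum>l\<le>N. s' l * int_binom x l)" for x
  have Peq: "P x = (\<Sum>l\<le>N. fd h l 0 * int_binom x l)" for x
    unfolding P_def s'_def s_def by (rule sum.cong) auto
  have ds: "r dvd (s' k - s k)" for k
    using big[of k] unfolding s'_def s_def by auto
  have fdP: "fd P i x = (\<Sum>l\<le>N. s' (l+i) * int_binom x l)" for i x
  proof (induction i arbitrary: x)
    case 0 then show ?case by (simp add: P_def)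
  next
    case (Suc i)
    have "fd P (Suc i) x = (\<Sum>l\<le>N. s' (l+i) * int_binom (x+1) l) - (\<Sum>l\<le>N. s' (l+i) * int_binom x l)"
      using Suc by simp
    also have "\<dots> = (\<Sum>l<N. s' (Suc l + i) * int_binom x l)" by (rule D1)
    also have "\<dots> = (\<Sum>l\<le>N. s' (l + Suc i) * int_binom x l)"
      by (simp add: lessThan_Suc_atMost[symmetric] s'_def del: lessThan_Suc_atMost)
    finally show ?case .
  qed
  have recs: "s l = (\<Sum>i\<le>q. int (q choose i) * s (l+i))" for l
    unfolding s_def by (rule recur_full[of h q, OF per])
  have perP: "r dvd (P (y + int q) - P y)" for y
  proof -
    have "P (y + int q) = (\<Sum>i\<le>q. int (q choose i) * fd P i y)" by (rule newton)
    also have "\<dots> = (\<Sum>i\<le>q. \<Sum>l\<le>N. int (q choose i) * (s' (l+i) * int_binom y l))"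
      by (simp add: fdP sum_distrib_left)
    also have "\<dots> = (\<Sum>l\<le>N. \<Sum>i\<le>q. int (q choose i) * (s' (l+i) * int_binom y l))"
      by (rule sum.swap)
    finally have e1: "P (y + int q) = (\<Sum>l\<le>N. \<Sum>i\<le>q. int (q choose i) * (s' (l+i) * int_binom y l))" .
    have e2: "P y = (\<Sum>l\<le>N. \<Sum>i\<le>q. int (q choose i) * (s (l+i) * int_binom y l))"
      unfolding P_def
    proof (rule sum.cong)
      fix l assume "l \<in> {..N}"
      then have "s' l = (\<Sum>i\<le>q. int (q choose i) * s (l+i))" using recs[of l] unfolding s'_def by simp
      then show "s' l * int_binom y l = (\<Sum>i\<le>q. int (q choose i) * (s (l+i) * int_binom y l))"
        by (simp add: sum_distrib_right mult.assoc)
    qed simp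
    have "P (y + int q) - P y = (\<Sum>l\<le>N. \<Sum>i\<le>q. int (q choose i) * int_binom y l * (s' (l+i) - s (l+i)))"
      unfolding e1 e2 by (simp add: sum_subtractf[symmetric] algebra_simps)
    also have "r dvd \<dots>"
      by (intro dvd_sum dvd_mult) (rule ds)
    finally show ?thesis .
  qed
  have perPt: "r dvd (P (y + int t * int q) - P y)" for t y
  proof (induction t)
    case 0 then show ?case by simp
  next
    case (Suc t)
    have "P (y + int (Suc t) * int q) = P ((y + int t * int q) + int q)" by (simp add: algebra_simps)
    then have "P (y + int (Suc t) * int q) - P y
       = (P ((y + int t * int q) + int q) - P (y + int t * int q)) + (P (y + int t * int q) - P y)" by simp
    then show ?case using perP Suc by (metis dvd_add)
  qed
  have perht: "h (y + int t * int q) = h y" for t y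
  proof (induction t)
    case 0 then show ?case by simp
  next
    case (Suc t)
    have "h (y + int (Suc t) * int q) = h ((y + int t * int q) + int q)" by (simp add: algebra_simps)
    then show ?case using per Suc by simp
  qed
  have nonneg: "r dvd (h (int m) - P (int m))" for m
  proof -
    have "h (0 + int m) = (\<Sum>i\<le>m. int (m choose i) * s i)" unfolding s_def by (rule newton)
    also have "\<dots> = (\<Sum>i\<le>N+m. int (m choose i) * s i)"
      by (rule sum.mono_neutral_left) auto
    finally have e1: "h (int m) = (\<Sum>i\<le>N+m. int (m choose i) * s i)" by simp
    have "P (int m) = (\<Sum>i\<le>N. int (m choose i) * s' i)" unfolding P_def by (simp add: int_binom_nat mult.commute)
    also have "\<dots> = (\<Sum>i\<le>N+m. int (m choose i) * s' i)"
      by (rule sum.mono_neutral_left) (auto simp: s'_def)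
    finally have e2: "P (int m) = (\<Sum>i\<le>N+m. int (m choose i) * s' i)" .
    have "h (int m) - P (int m) = (\<Sum>i\<le>N+m. int (m choose i) * (s i - s' i))"
      unfolding e1 e2 by (simp add: sum_subtractf[symmetric] algebra_simps)
    also have "r dvd \<dots>" using ds by (intro dvd_sum dvd_mult) (metis dvd_diff_commute)
    finally show ?thesis .
  qed
  define t where "t = nat \<bar>x\<bar>"
  have xt: "x + int t * int q \<ge> 0" unfolding t_def using q
    by (cases "x \<ge> 0") (auto simp: algebra_simps intro: order_trans[of _ "\<bar>x\<bar>"] mult_le_cancel_left1)
  define m where "m = nat (x + int t * int q)"
  have m: "x + int t * int q = int m" unfolding m_def using xt by simp
  have "h x - P x = (h (x + int t * int q) - P (x + int t * int q)) + (P (x + int t * int q) - P x)"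
    using perht[of x t] by simp
  also have "r dvd \<dots>" unfolding m by (rule dvd_add[OF nonneg[of m] perPt[of x t, unfolded m]])
  finally show ?thesis using Peq by simp
qed




definition Box :: "nat \<Rightarrow> (nat \<Rightarrow> nat) \<Rightarrow> (nat \<Rightarrow> nat) set" where
  "Box n M = {\<delta>. (\<forall>j<n. \<delta> j \<le> M j) \<and> (\<forall>j\<ge>n. \<delta> j = 0)}"

lemma finite_Box: "finite (Box n M)"
proof -
  have "Box n M \<subseteq> {f. \<forall>x. (x \<in> {..<n} \<longrightarrow> f x \<in> {..(\<Sum>j<n. M j)}) \<and> (x \<notin> {..<n} \<longrightarrow> f x = 0)}"
  proof
    fix \<delta> assume d: "\<delta> \<in> Box n M"
    have "\<delta> x \<le> (\<Sum>j<n. M j)" if "x < n" for x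
    proof -
      have "\<delta> x \<le> M x" using d that unfolding Box_def by auto
      also have "M x \<le> (\<Sum>j<n. M j)" using that by (intro member_le_sum) auto
      finally show ?thesis .
    qed
    then show "\<delta> \<in> {f. \<forall>x. (x \<in> {..<n} \<longrightarrow> f x \<in> {..(\<Sum>j<n. M j)}) \<and> (x \<notin> {..<n} \<longrightarrow> f x = 0)}"
      using d unfolding Box_def by auto
  qed
  moreover have "finite {f. \<forall>x. (x \<in> {..<n} \<longrightarrow> f x \<in> {..(\<Sum>j<n. M j)}) \<and> (x \<notin> {..<n} \<longrightarrow> f x = (0::nat))}"
    by (rule finite_set_of_finite_funs) auto
  ultimately show ?thesis by (rule finite_subset)
qed

lemma Box_Suc: "Box (Suc n) M = (\<lambda>(\<delta>,k). \<delta>(n:=k)) ` (Box n M \<times> {..M n})"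
proof
  show "Box (Suc n) M \<subseteq> (\<lambda>(\<delta>,k). \<delta>(n:=k)) ` (Box n M \<times> {..M n})"
  proof
    fix \<delta> assume d: "\<delta> \<in> Box (Suc n) M"
    have "\<delta> = (\<lambda>(\<delta>,k). \<delta>(n:=k)) (\<delta>(n:=0), \<delta> n)" by simp
    moreover have "(\<delta>(n:=0), \<delta> n) \<in> Box n M \<times> {..M n}" using d unfolding Box_def by auto
    ultimately show "\<delta> \<in> (\<lambda>(\<delta>,k). \<delta>(n:=k)) ` (Box n M \<times> {..M n})" by blast
  qed
  show "(\<lambda>(\<delta>,k). \<delta>(n:=k)) ` (Box n M \<times> {..M n}) \<subseteq> Box (Suc n) M"
    unfolding Box_def by auto
qed

lemma inj_Box_Suc: "inj_on (\<lambda>(\<delta>,k). \<delta>(n:=k)) (Box n M \<times> {..M n})"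
proof (rule inj_onI, clarsimp)
  fix \<delta> k \<delta>' k'
  assume "\<delta> \<in> Box n M" "\<delta>' \<in> Box n M" and e: "\<delta>(n := k) = \<delta>'(n := k')"
  then have z: "\<delta> n = 0" "\<delta>' n = 0" unfolding Box_def by auto
  have "k = k'" using fun_cong[OF e, of n] by simp
  moreover have "\<delta> = \<delta>'"
  proof
    fix j show "\<delta> j = \<delta>' j" using fun_cong[OF e, of j] z by (cases "j = n") auto
  qed
  ultimately show "\<delta> = \<delta>' \<and> k = k'" by simp
qed

lemma BX: "(\<Sum>\<delta>\<in>Box n M. \<Prod>j<n. F j (\<delta> j)) = (\<Prod>j<n. \<Sum>k\<le>M j. (F j k :: int))"
proof (induction n)
  case 0
  have "Box 0 M = {\<lambda>_. 0}" unfolding Box_def by auto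
  then show ?case by simp
next
  case (Suc n)
  have "(\<Sum>\<delta>\<in>Box (Suc n) M. \<Prod>j<Suc n. F j (\<delta> j))
      = (\<Sum>x\<in>Box n M \<times> {..M n}. \<Prod>j<Suc n. F j (((\<lambda>(\<delta>,k). \<delta>(n:=k)) x) j))"
    unfolding Box_Suc by (rule sum.reindex[OF inj_Box_Suc, unfolded comp_def])
  also have "\<dots> = (\<Sum>x\<in>Box n M \<times> {..M n}. (\<Prod>j<n. F j (fst x j)) * F n (snd x))"
  proof (rule sum.cong)
    fix x assume "x \<in> Box n M \<times> {..M n}"
    obtain \<delta> k where x: "x = (\<delta>, k)" by (cases x)
    have "(\<Prod>j<n. F j ((\<delta>(n:=k)) j)) = (\<Prod>j<n. F j (\<delta> j))" by (rule prod.cong) auto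
    then show "(\<Prod>j<Suc n. F j (((\<lambda>(\<delta>,k). \<delta>(n:=k)) x) j)) = (\<Prod>j<n. F j (fst x j)) * F n (snd x)"
      unfolding x by simp
  qed simp
  also have "\<dots> = (\<Sum>\<delta>\<in>Box n M. \<Sum>k\<le>M n. (\<Prod>j<n. F j (\<delta> j)) * F n k)"
    by (simp add: sum.cartesian_product split_def)
  also have "\<dots> = (\<Sum>\<delta>\<in>Box n M. \<Prod>j<n. F j (\<delta> j)) * (\<Sum>k\<le>M n. F n k)"
    by (simp add: sum_product)
  also have "\<dots> = (\<Prod>j<Suc n. \<Sum>k\<le>M j. F j k)" using Suc by simp
  finally show ?case .
qed

lemma prod_cong_dvd:
  fixes X Y :: "nat \<Rightarrow> int"
  assumes "finite A" "\<And>j. j \<in> A \<Longrightarrow> r dvd (X j - Y j)"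
  shows "r dvd (\<Prod>j\<in>A. X j) - (\<Prod>j\<in>A. Y j)"
  using assms
proof (induction A rule: finite_induct)
  case empty then show ?case by simp
next
  case (insert a A)
  have "(\<Prod>j\<in>insert a A. X j) - (\<Prod>j\<in>insert a A. Y j)
      = X a * ((\<Prod>j\<in>A. X j) - (\<Prod>j\<in>A. Y j)) + (X a - Y a) * (\<Prod>j\<in>A. Y j)"
    using insert by (simp add: algebra_simps)
  also have "r dvd \<dots>" using insert by (intro dvd_add dvd_mult dvd_mult2) auto
  finally show ?case .
qed

lemma uniq:
  fixes S :: "(nat \<Rightarrow> nat) set" and d :: "(nat \<Rightarrow> nat) \<Rightarrow> int"
  assumes fin: "finite S" and van: "\<And>\<delta> j. \<delta> \<in> S \<Longrightarrow> n \<le> j \<Longrightarrow> \<delta> j = 0"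
  and ev: "\<And>m. r dvd (\<Sum>\<delta>\<in>S. d \<delta> * (\<Prod>j<n. int_binom (int (m j)) (\<delta> j)))"
  and d: "\<delta> \<in> S"
  shows "r dvd d \<delta>"
proof (rule ccontr)
  assume nd: "\<not> r dvd d \<delta>"
  define T where "T = {\<delta>\<in>S. \<not> r dvd d \<delta>}"
  define \<sigma> where "\<sigma> \<delta> = (\<Sum>j<n. \<delta> j)" for \<delta> :: "nat \<Rightarrow> nat"
  obtain \<delta>0 where d0: "\<delta>0 \<in> T" and mn: "\<And>\<delta>. \<delta> \<in> T \<Longrightarrow> \<sigma> \<delta>0 \<le> \<sigma> \<delta>"
    using ex_has_least_nat[of "\<lambda>\<delta>. \<delta> \<in> T" \<delta> \<sigma>] d nd unfolding T_def by blast
  have d0S: "\<delta>0 \<in> S" and nd0: "\<not> r dvd d \<delta>0" using d0 unfolding T_def by auto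
  define G where "G \<delta> = d \<delta> * (\<Prod>j<n. int_binom (int (\<delta>0 j)) (\<delta> j))" for \<delta>
  have split: "(\<Sum>\<delta>\<in>S. G \<delta>) = G \<delta>0 + (\<Sum>\<delta>\<in>S - {\<delta>0}. G \<delta>)"
    using fin d0S by (simp add: sum.remove)
  have G0: "G \<delta>0 = d \<delta>0" unfolding G_def by (simp add: int_binom_nat)
  have all: "r dvd (\<Sum>\<delta>\<in>S. G \<delta>)" using ev[of \<delta>0] unfolding G_def .
  have rest: "r dvd (\<Sum>\<delta>\<in>S - {\<delta>0}. G \<delta>)"
  proof (rule dvd_sum)
    fix \<delta> assume dS: "\<delta> \<in> S - {\<delta>0}"
    show "r dvd G \<delta>"
    proof (cases "r dvd d \<delta>")
      case True then show ?thesis unfolding G_def by simp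
    next
      case False
      then have dT: "\<delta> \<in> T" using dS unfolding T_def by auto
      have "\<exists>j<n. \<delta>0 j < \<delta> j"
      proof (rule ccontr)
        assume "\<not> (\<exists>j<n. \<delta>0 j < \<delta> j)"
        then have le: "\<forall>j\<in>{..<n}. \<delta> j \<le> \<delta>0 j" by auto
        show False
        proof (cases "\<exists>j\<in>{..<n}. \<delta> j < \<delta>0 j")
          case True
          then have "\<sigma> \<delta> < \<sigma> \<delta>0" unfolding \<sigma>_def using le by (intro sum_strict_mono_ex1) auto
          then show False using mn[OF dT] by simp
        next
          case False
          have "\<delta> = \<delta>0"
          proof
            fix j show "\<delta> j = \<delta>0 j"
            proof (cases "j < n")
              case True
              then have "\<delta> j \<le> \<delta>0 j" "\<not> \<delta> j < \<delta>0 j" using le False by auto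
              then show ?thesis by simp
            next
              case False
              then show ?thesis using van[OF d0S, of j] van[of \<delta> j] dS by simp
            qed
          qed
          then show False using dS by simp
        qed
      qed
      then obtain j where j: "j < n" "\<delta>0 j < \<delta> j" by blast
      have "int_binom (int (\<delta>0 j)) (\<delta> j) = 0" using j by (simp add: int_binom_nat)
      then have "(\<Prod>j<n. int_binom (int (\<delta>0 j)) (\<delta> j)) = 0" using j by (intro prod_zero) auto
      then show ?thesis unfolding G_def by (metis dvd_0_right mult_zero_right)
    qed
  qed
  have "G \<delta>0 = (\<Sum>\<delta>\<in>S. G \<delta>) - (\<Sum>\<delta>\<in>S - {\<delta>0}. G \<delta>)" using split by simp
  then have "r dvd G \<delta>0" using all rest by (simp add: dvd_diff)
  then show False using nd0 G0 by simp
qed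

lemma bv_ineq:
  assumes "0 < \<phi>"
  shows "d + 1 \<le> q + \<phi> * bv q \<phi> d"
proof (cases "d < q")
  case True then show ?thesis by (simp add: bv_def)
next
  case False
  have e1: "d - q = \<phi> * ((d - q) div \<phi>) + (d - q) mod \<phi>" by simp
  have e2: "(d - q) mod \<phi> < \<phi>" using assms by simp
  have "d - q < \<phi> * ((d - q) div \<phi>) + \<phi>" using e1 e2 by linarith
  then have "d - q < \<phi> * ((d - q) div \<phi> + 1)" by (simp add: algebra_simps)
  then show ?thesis using False by (simp add: bv_def)
qed




definition hh :: "nat \<Rightarrow> nat \<Rightarrow> int \<Rightarrow> int" where
  "hh Q a y = (if int Q dvd (y - int a) then 1 else 0)"

definition ss :: "nat \<Rightarrow> nat \<Rightarrow> nat \<Rightarrow> int" where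
  "ss Q a k = fd (hh Q a) k 0"

lemma hh_per: "hh Q a (y + int Q) = hh Q a y"
proof -
  have "y + int Q - int a = (y - int a) + int Q" by simp
  then show ?thesis by (simp only: hh_def dvd_add_triv_right_iff)
qed

lemma ss_rec:
  assumes "Q \<ge> 1"
  shows "ss Q a (k + Q) = - (\<Sum>i\<in>{1..<Q}. int (Q choose i) * ss Q a (k+i))"
  unfolding ss_def by (rule recur[of "hh Q a" Q, OF hh_per assms])

lemma ss_val:
  fixes p :: nat assumes p: "prime p" and a: "\<alpha> \<ge> 1"
  shows "int p ^ bv (p^\<alpha>) ((p-1)*p^(\<alpha>-1)) k dvd ss (p^\<alpha>) b k"
proof -
  have "p^\<alpha> \<ge> 1" using prime_gt_0_nat[OF p] by simp
  show ?thesis by (rule val_seq[OF p a ss_rec[OF \<open>p^\<alpha> \<ge> 1\<close>]])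
qed

lemma ss_big:
  fixes p :: nat assumes p: "prime p" and a: "\<alpha> \<ge> 1" and b: "\<beta> \<ge> 1"
  and N: "p^\<alpha> - 1 + (\<beta>-1)*((p-1)*p^(\<alpha>-1)) \<le> N" and k: "N < k"
  shows "int p ^ \<beta> dvd ss (p^\<alpha>) b k"
proof -
  have q2: "0 < (p-1)*p^(\<alpha>-1)" "p^\<alpha> \<ge> 1" using q_le_2phi[OF p a] prime_gt_0_nat[OF p] by auto
  have "p^\<alpha> + (\<beta>-1)*((p-1)*p^(\<alpha>-1)) \<le> k" using N k q2 by linarith
  then have "(\<beta>-1) + 1 \<le> bv (p^\<alpha>) ((p-1)*p^(\<alpha>-1)) k" by (rule bv_ge[OF q2(1)])
  then have "\<beta> \<le> bv (p^\<alpha>) ((p-1)*p^(\<alpha>-1)) k" using b by simp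
  then show ?thesis using ss_val[OF p a, of k b] by (meson le_imp_power_dvd dvd_trans)
qed

lemma ss_rep:
  fixes p :: nat assumes p: "prime p" and a: "\<alpha> \<ge> 1" and b: "\<beta> \<ge> 1"
  and N: "p^\<alpha> - 1 + (\<beta>-1)*((p-1)*p^(\<alpha>-1)) \<le> N"
  shows "int p ^ \<beta> dvd (hh (p^\<alpha>) c x - (\<Sum>l\<le>N. ss (p^\<alpha>) c l * int_binom x l))"
proof -
  have "p^\<alpha> \<ge> 1" using prime_gt_0_nat[OF p] by simp
  show ?thesis unfolding ss_def
    by (rule rep[of "hh (p^\<alpha>) c" "p^\<alpha>", OF hh_per \<open>p^\<alpha> \<ge> 1\<close>]) (use ss_big[OF p a b N] in \<open>simp add: ss_def\<close>)
qed

lemma ss_small: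
  assumes "k < Q"
  shows "ss Q 0 k = (-1)^k"
  using assms
proof (induction k rule: less_induct)
  case (less k)
  show ?case
  proof (cases "k = 0")
    case True then show ?thesis by (simp add: ss_def hh_def)
  next
    case False
    have "hh Q 0 (0 + int k) = (\<Sum>i\<le>k. int (k choose i) * ss Q 0 i)" unfolding ss_def by (rule newton)
    moreover have "hh Q 0 (int k) = 0" using False less.prems unfolding hh_def by (auto dest: zdvd_imp_le)
    moreover have "(\<Sum>i\<le>k. int (k choose i) * ss Q 0 i) = (\<Sum>i<k. int (k choose i) * (-1)^i) + ss Q 0 k"
    proof -
      have "(\<Sum>i\<le>k. int (k choose i) * ss Q 0 i) = (\<Sum>i<k. int (k choose i) * ss Q 0 i) + ss Q 0 k"
        by (simp add: lessThan_Suc_atMost[symmetric] del: lessThan_Suc_atMost)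
      moreover have "(\<Sum>i<k. int (k choose i) * ss Q 0 i) = (\<Sum>i<k. int (k choose i) * (-1)^i)"
        using less by (intro sum.cong) auto
      ultimately show ?thesis by simp
    qed
    moreover have "(\<Sum>i<k. int (k choose i) * (-1)^i) + (-1)^k = 0"
    proof -
      have "(\<Sum>i\<le>k. (-1)^i * of_nat (k choose i) :: int) = 0" using False by (intro choose_alternating_sum) simp
      then show ?thesis by (simp add: lessThan_Suc_atMost[symmetric] mult.commute del: lessThan_Suc_atMost)
    qed
    ultimately show ?thesis by simp
  qed
qed

lemma mval:
  fixes p \<beta> n :: nat and \<alpha> \<delta> :: "nat \<Rightarrow> nat" and S :: "nat \<Rightarrow> int"
  assumes p: "prime p" and \<alpha>: "\<forall>j<n. \<alpha> j \<ge> 1"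
  and dv: "\<And>j. j < n \<Longrightarrow> int p ^ bv (p^\<alpha> j) ((p-1)*p^(\<alpha> j - 1)) (\<delta> j) dvd S j"
  and big: "(\<Sum>j<n. \<delta> j) > (\<Sum>j<n. p ^ \<alpha> j) - n + (\<beta> - 1) * (p - 1) * p ^ (Max (\<alpha> ` {..<n}) - 1)"
  shows "int p ^ \<beta> dvd (\<Prod>j<n. S j)"
proof -
  define A where "A = Max (\<alpha> ` {..<n})"
  define \<Phi> where "\<Phi> = (p-1)*p^(A-1)"
  define b where "b j = bv (p^\<alpha> j) ((p-1)*p^(\<alpha> j - 1)) (\<delta> j)" for j
  have p1: "p > 1" using prime_gt_1_nat[OF p] by simp
  have "(\<Prod>j<n. int p ^ b j) dvd (\<Prod>j<n. S j)" using dv unfolding b_def by (intro prod_dvd_prod) auto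
  then have pw: "int p ^ (\<Sum>j<n. b j) dvd (\<Prod>j<n. S j)" by (simp add: power_sum)
  have each: "\<delta> j + 1 \<le> p^\<alpha> j + \<Phi> * b j" if j: "j < n" for j
  proof -
    have "0 < (p-1)*p^(\<alpha> j - 1)" using p1 by simp
    then have "\<delta> j + 1 \<le> p^\<alpha> j + (p-1)*p^(\<alpha> j - 1) * b j" unfolding b_def by (rule bv_ineq)
    moreover have "\<alpha> j \<le> A" unfolding A_def using j by (intro Max_ge) auto
    then have "(p-1)*p^(\<alpha> j - 1) \<le> \<Phi>" unfolding \<Phi>_def using p1
      by (intro mult_le_mono2 power_increasing) auto
    then have "(p-1)*p^(\<alpha> j - 1) * b j \<le> \<Phi> * b j" by (rule mult_le_mono1)
    ultimately show ?thesis by linarith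
  qed
  have "(\<Sum>j<n. \<delta> j + 1) \<le> (\<Sum>j<n. p^\<alpha> j + \<Phi> * b j)" using each by (intro sum_mono) auto
  moreover have "(\<Sum>j<n. \<delta> j + 1) = (\<Sum>j<n. \<delta> j) + n" unfolding sum.distrib by simp
  moreover have "(\<Sum>j<n. p^\<alpha> j + \<Phi> * b j) = (\<Sum>j<n. p^\<alpha> j) + \<Phi> * (\<Sum>j<n. b j)"
    by (simp add: sum.distrib sum_distrib_left)
  ultimately have s1: "(\<Sum>j<n. \<delta> j) + n \<le> (\<Sum>j<n. p^\<alpha> j) + \<Phi> * (\<Sum>j<n. b j)"
    by simp
  have "(\<Sum>j<n. (1::nat)) \<le> (\<Sum>j<n. p^\<alpha> j)" using p1 by (intro sum_mono) simp
  then have s2: "n \<le> (\<Sum>j<n. p^\<alpha> j)" by simp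
  have s3: "(\<Sum>j<n. \<delta> j) > (\<Sum>j<n. p ^ \<alpha> j) - n + (\<beta> - 1) * \<Phi>"
    using big unfolding \<Phi>_def A_def by (simp add: mult.assoc)
  have s4: "(\<Sum>j<n. p ^ \<alpha> j) - n + n = (\<Sum>j<n. p ^ \<alpha> j)" using s2 by simp
  have "(\<beta> - 1) * \<Phi> < \<Phi> * (\<Sum>j<n. b j)" using s1 s3 s4 by linarith
  then have "(\<beta> - 1) * \<Phi> < (\<Sum>j<n. b j) * \<Phi>" by (simp add: mult.commute)
  then have "\<beta> - 1 < (\<Sum>j<n. b j)" using mult_less_cancel2 by blast
  then have "\<beta> \<le> (\<Sum>j<n. b j)" by simp
  then show ?thesis using pw by (meson le_imp_power_dvd dvd_trans)
qed




lemma HN: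
  fixes p \<beta> n :: nat and \<alpha> :: "nat \<Rightarrow> nat"
  assumes p: "prime p" and j: "j < n"
  shows "p^\<alpha> j - 1 + (\<beta>-1)*((p-1)*p^(\<alpha> j - 1))
         \<le> (\<Sum>j<n. p ^ \<alpha> j) - n + (\<beta> - 1) * (p - 1) * p ^ (Max (\<alpha> ` {..<n}) - 1)"
proof -
  have p1: "p > 1" using prime_gt_1_nat[OF p] by simp
  have ge1: "1 \<le> p ^ \<alpha> i" for i using p1 by simp
  have "(\<Sum>i<n. p ^ \<alpha> i) - n = (\<Sum>i<n. p ^ \<alpha> i - 1)"
    using ge1 by (simp add: sum_subtractf_nat)
  moreover have "p^\<alpha> j - 1 \<le> (\<Sum>i<n. p ^ \<alpha> i - 1)" using j by (intro member_le_sum) auto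
  moreover have "\<alpha> j \<le> Max (\<alpha> ` {..<n})" using j by (intro Max_ge) auto
  then have "(p-1)*p^(\<alpha> j - 1) \<le> (p - 1) * p ^ (Max (\<alpha> ` {..<n}) - 1)" using p1
    by (intro mult_le_mono2 power_increasing) auto
  then have "(\<beta>-1)*((p-1)*p^(\<alpha> j - 1)) \<le> (\<beta> - 1) * (p - 1) * p ^ (Max (\<alpha> ` {..<n}) - 1)"
    by (simp add: mult.assoc)
  ultimately show ?thesis by linarith
qed

lemma shift_nat:
  fixes f :: "(nat \<Rightarrow> int) \<Rightarrow> int"
  assumes per: "\<And>x. f (x(j := x j + Q)) = f x"
  shows "f (x(j := x j + int t * Q)) = f x"
proof (induction t)
  case 0 then show ?case by simp
next
  case (Suc t)
  define y where "y = x(j := x j + int t * Q)"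
  have e: "x(j := x j + int (Suc t) * Q) = y(j := y j + Q)"
    unfolding y_def by (simp add: algebra_simps)
  have "f (x(j := x j + int (Suc t) * Q)) = f y" unfolding e by (rule per)
  also have "f y = f x" unfolding y_def by (rule Suc.IH)
  finally show ?case .
qed

lemma shift_int:
  fixes f :: "(nat \<Rightarrow> int) \<Rightarrow> int"
  assumes per: "\<And>x. f (x(j := x j + Q)) = f x"
  shows "f (x(j := x j + z * Q)) = f x"
proof (cases "z \<ge> 0")
  case True
  then show ?thesis using shift_nat[of f j Q, OF per, of x "nat z"] by simp
next
  case False
  define y where "y = x(j := x j + z * Q)"
  have "x = y(j := y j + int (nat (-z)) * Q)" unfolding y_def using False by (auto simp: algebra_simps)
  then have "f x = f y" using shift_nat[of f j Q, OF per, of y "nat (-z)"] by simp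
  then show ?thesis unfolding y_def by simp
qed

lemma reduce:
  fixes f :: "(nat \<Rightarrow> int) \<Rightarrow> int" and Q :: "nat \<Rightarrow> int"
  assumes per: "\<And>x j. j < n \<Longrightarrow> f (x(j := x j + Q j)) = f x"
  and loc: "\<And>x y. (\<And>j. j < n \<Longrightarrow> x j = y j) \<Longrightarrow> f x = f y"
  and y: "\<And>j. j < n \<Longrightarrow> y j = x j mod Q j"
  shows "f y = f x"
proof -
  have "k \<le> n \<Longrightarrow> f (\<lambda>j. if j < k then x j mod Q j else x j) = f x" for k
  proof (induction k)
    case 0 then show ?case by simp
  next
    case (Suc k)
    define v where "v = (\<lambda>j. if j < k then x j mod Q j else x j)"
    have E1: "(\<lambda>j. if j < Suc k then x j mod Q j else x j) = v(k := v k + (- (x k div Q k)) * Q k)"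
      unfolding v_def by (auto simp: fun_eq_iff minus_div_mult_eq_mod[symmetric] algebra_simps)
    have perk: "\<And>x. f (x(k := x k + Q k)) = f x" using per Suc.prems by simp
    have E2: "f (v(k := v k + (- (x k div Q k)) * Q k)) = f v"
      by (rule shift_int[of f k "Q k", OF perk])
    have E3: "f v = f x" using Suc unfolding v_def by simp
    show ?case by (simp only: E1 E2 E3)
  qed
  from this[of n] have "f (\<lambda>j. if j < n then x j mod Q j else x j) = f x" by simp
  moreover have "f y = f (\<lambda>j. if j < n then x j mod Q j else x j)" using y by (intro loc) simp
  ultimately show ?thesis by simp
qed




lemma mod_diff_dvd: "(r::int) dvd z - z mod r"
  by (simp add: minus_mod_eq_mult_div)

lemma hh_sum:
  fixes q :: "nat \<Rightarrow> nat" and x :: "nat \<Rightarrow> int" and g :: "(nat \<Rightarrow> nat) \<Rightarrow> int"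
  assumes q: "\<And>j. j < n \<Longrightarrow> q j \<ge> 1"
  defines "a0 \<equiv> (\<lambda>j. if j < n then nat (x j mod int (q j)) else 0)"
  shows "(\<Sum>a\<in>Box n (\<lambda>j. q j - 1). g a * (\<Prod>j<n. hh (q j) (a j) (x j))) = g a0"
proof -
  have qpos: "j < n \<Longrightarrow> int (q j) > 0" for j using q[of j] by simp
  have a0B: "a0 \<in> Box n (\<lambda>j. q j - 1)"
  proof -
    have "a0 j \<le> q j - 1" if "j < n" for j
    proof -
      have "x j mod int (q j) < int (q j)" using qpos[OF that] by simp
      then show ?thesis unfolding a0_def using that by simp
    qed
    then show ?thesis unfolding Box_def a0_def by auto
  qed
  have one: "(\<Prod>j<n. hh (q j) (a0 j) (x j)) = 1"
  proof (rule prod.neutral, clarsimp)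
    fix j assume j: "j < n"
    have "int (a0 j) = x j mod int (q j)" unfolding a0_def using j qpos[OF j] by simp
    then show "hh (q j) (a0 j) (x j) = 1" unfolding hh_def by (simp add: minus_mod_eq_mult_div)
  qed
  have zero: "(\<Prod>j<n. hh (q j) (a j) (x j)) = 0" if a: "a \<in> Box n (\<lambda>j. q j - 1) - {a0}" for a
  proof -
    have "\<exists>j<n. a j \<noteq> a0 j"
    proof (rule ccontr)
      assume "\<not> (\<exists>j<n. a j \<noteq> a0 j)"
      then have "a = a0" using a a0B unfolding Box_def by (auto simp: fun_eq_iff) (metis not_le)
      then show False using a by simp
    qed
    then obtain j where j: "j < n" "a j \<noteq> a0 j" by blast
    have "hh (q j) (a j) (x j) = 0"
    proof (rule ccontr)
      assume "hh (q j) (a j) (x j) \<noteq> 0"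
      then have "int (q j) dvd x j - int (a j)" unfolding hh_def by (simp split: if_splits)
      then have "x j mod int (q j) = int (a j) mod int (q j)" by (simp add: mod_eq_dvd_iff)
      moreover have "a j < q j" using a j q[OF j(1)] unfolding Box_def by auto
      ultimately have "x j mod int (q j) = int (a j)" by simp
      then have "a0 j = a j" unfolding a0_def using j by simp
      then show False using j by simp
    qed
    then show ?thesis using j by (intro prod_zero) auto
  qed
  have "(\<Sum>a\<in>Box n (\<lambda>j. q j - 1). g a * (\<Prod>j<n. hh (q j) (a j) (x j)))
      = g a0 * (\<Prod>j<n. hh (q j) (a0 j) (x j)) + (\<Sum>a\<in>Box n (\<lambda>j. q j - 1) - {a0}. g a * (\<Prod>j<n. hh (q j) (a j) (x j)))"
    using a0B finite_Box by (simp add: sum.remove)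
  also have "(\<Sum>a\<in>Box n (\<lambda>j. q j - 1) - {a0}. g a * (\<Prod>j<n. hh (q j) (a j) (x j))) = 0"
    using zero by (intro sum.neutral) simp
  finally show ?thesis using one by simp
qed




lemma upper:
  fixes p \<beta> n N :: nat and \<alpha> :: "nat \<Rightarrow> nat" and c :: "(nat \<Rightarrow> nat) \<Rightarrow> int"
  assumes p: "prime p" and b: "\<beta> \<ge> 1" and a: "\<forall>j<n. \<alpha> j \<ge> 1"
  and N: "N = (\<Sum>j<n. p ^ \<alpha> j) - n + (\<beta> - 1) * (p - 1) * p ^ (Max (\<alpha> ` {..<n}) - 1)"
  and pc: "is_polyfract n (int p ^ \<beta>) c"
  and per: "pf_periodic n (int p ^ \<beta>) (\<lambda>j. int p ^ \<alpha> j) c"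
  shows "pf_degree n c \<le> N"
proof -
  define r where "r = int p ^ \<beta>"
  define q where "q j = p ^ \<alpha> j" for j
  define f where "f = pf_eval n r c"
  define supp where "supp = {\<delta>. c \<delta> \<noteq> 0}"
  define BN where "BN = Box n (\<lambda>_. N)"
  define BQ where "BQ = Box n (\<lambda>j. q j - 1)"
  define \<sigma> where "\<sigma> \<delta> = (\<Sum>j<n. \<delta> j)" for \<delta> :: "nat \<Rightarrow> nat"
  have p1: "p > 1" using prime_gt_1_nat[OF p] by simp
  have rpos: "r > 0" unfolding r_def using p1 by simp
  have q1: "q j \<ge> 1" for j unfolding q_def using p1 by simp
  have fin: "finite supp" and crange: "\<And>\<delta>. 0 \<le> c \<delta> \<and> c \<delta> < r"
    and van: "\<And>\<delta> j. \<delta> \<in> supp \<Longrightarrow> n \<le> j \<Longrightarrow> \<delta> j = 0"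
    using pc unfolding is_polyfract_def supp_def r_def by auto
  have feq: "f x = (\<Sum>\<delta>\<in>supp. c \<delta> * (\<Prod>j<n. int_binom (x j) (\<delta> j))) mod r" for x
    unfolding f_def pf_eval_def supp_def ..
  have loc: "f x = f y" if "\<And>j. j < n \<Longrightarrow> x j = y j" for x y
  proof -
    have "(\<Prod>j<n. int_binom (x j) (\<delta> j)) = (\<Prod>j<n. int_binom (y j) (\<delta> j))" for \<delta>
      by (rule prod.cong) (simp_all add: that)
    then show ?thesis unfolding feq by (simp only:)
  qed
  have perf: "f (x(j := x j + int (q j))) = f x" if "j < n" for x j
    using per that unfolding pf_periodic_def f_def r_def q_def by simp
  have red: "f y = f x" if "\<And>j. j < n \<Longrightarrow> y j = x j mod int (q j)" for x y
    by (rule reduce[of n f "\<lambda>j. int (q j)", OF perf loc that])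
  define c' where "c' \<delta> = (if \<delta> \<in> BN then (\<Sum>a\<in>BQ. f (\<lambda>j. int (a j)) * (\<Prod>j<n. ss (q j) (a j) (\<delta> j))) else 0)" for \<delta>
  define S where "S = supp \<union> BN"
  have finS: "finite S" unfolding S_def BN_def using fin finite_Box by simp
  have vanS: "\<And>\<delta> j. \<delta> \<in> S \<Longrightarrow> n \<le> j \<Longrightarrow> \<delta> j = 0"
    using van unfolding S_def BN_def Box_def by auto
  define E where "E d x = (\<Sum>\<delta>\<in>S. d \<delta> * (\<Prod>j<n. int_binom (x j) (\<delta> j)))" for d x
  have HNj: "j < n \<Longrightarrow> p^\<alpha> j - 1 + (\<beta>-1)*((p-1)*p^(\<alpha> j - 1)) \<le> N" for j
    unfolding N by (rule HN[OF p])
  have c1: "r dvd E c x - f x" for x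
  proof -
    have "E c x = (\<Sum>\<delta>\<in>supp. c \<delta> * (\<Prod>j<n. int_binom (x j) (\<delta> j)))"
      unfolding E_def by (rule sum.mono_neutral_right) (use finS in \<open>auto simp: S_def supp_def\<close>)
    then show ?thesis unfolding feq by (simp add: mod_diff_dvd)
  qed
  have c2: "r dvd E c' x - f x" for x
  proof -
    have "E c' x = (\<Sum>\<delta>\<in>BN. c' \<delta> * (\<Prod>j<n. int_binom (x j) (\<delta> j)))"
      unfolding E_def by (rule sum.mono_neutral_right) (use finS in \<open>auto simp: S_def c'_def\<close>)
    also have "\<dots> = (\<Sum>\<delta>\<in>BN. \<Sum>a\<in>BQ. f (\<lambda>j. int (a j)) * (\<Prod>j<n. ss (q j) (a j) (\<delta> j) * int_binom (x j) (\<delta> j)))"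
      unfolding c'_def by (intro sum.cong refl) (simp add: sum_distrib_right prod.distrib mult.assoc)
    also have "\<dots> = (\<Sum>a\<in>BQ. f (\<lambda>j. int (a j)) * (\<Sum>\<delta>\<in>BN. \<Prod>j<n. ss (q j) (a j) (\<delta> j) * int_binom (x j) (\<delta> j)))"
      by (subst sum.swap) (simp add: sum_distrib_left)
    also have "\<dots> = (\<Sum>a\<in>BQ. f (\<lambda>j. int (a j)) * (\<Prod>j<n. \<Sum>k\<le>N. ss (q j) (a j) k * int_binom (x j) k))"
    proof -
      have bx: "\<And>a. (\<Sum>\<delta>\<in>BN. \<Prod>j<n. ss (q j) (a j) (\<delta> j) * int_binom (x j) (\<delta> j)) = (\<Prod>j<n. \<Sum>k\<le>N. ss (q j) (a j) k * int_binom (x j) k)"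
        unfolding BN_def by (rule BX)
      show ?thesis by (simp only: bx)
    qed
    finally have e1: "E c' x = \<dots>" .
    have "r dvd (\<Sum>a\<in>BQ. f (\<lambda>j. int (a j)) * (\<Prod>j<n. \<Sum>k\<le>N. ss (q j) (a j) k * int_binom (x j) k))
               - (\<Sum>a\<in>BQ. f (\<lambda>j. int (a j)) * (\<Prod>j<n. hh (q j) (a j) (x j)))"
      unfolding sum_subtractf[symmetric] right_diff_distrib[symmetric]
    proof (intro dvd_sum dvd_mult prod_cong_dvd)
      fix a j assume j: "j \<in> {..<n}"
      have "r dvd hh (q j) (a j) (x j) - (\<Sum>k\<le>N. ss (q j) (a j) k * int_binom (x j) k)"
        unfolding r_def q_def using ss_rep[OF p _ b HNj] a j by simp
      then show "r dvd (\<Sum>k\<le>N. ss (q j) (a j) k * int_binom (x j) k) - hh (q j) (a j) (x j)"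
        by (simp add: dvd_diff_commute)
    qed simp
    moreover have "(\<Sum>a\<in>BQ. f (\<lambda>j. int (a j)) * (\<Prod>j<n. hh (q j) (a j) (x j)))
        = f (\<lambda>j. int ((\<lambda>j. if j < n then nat (x j mod int (q j)) else 0) j))"
      unfolding BQ_def by (rule hh_sum) (use q1 in simp)
    moreover have "f (\<lambda>j. int ((\<lambda>j. if j < n then nat (x j mod int (q j)) else 0) j)) = f x"
    proof (rule red)
      fix j assume "j < n"
      have "0 < int (q j)" using q1[of j] by simp
      then show "int ((\<lambda>j. if j < n then nat (x j mod int (q j)) else 0) j) = x j mod int (q j)"
        using \<open>j < n\<close> by simp
    qed
    ultimately show ?thesis using e1 by simp
  qed
  have cong: "r dvd c \<delta> - c' \<delta>" if "\<delta> \<in> S" for \<delta>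
  proof (rule uniq[of S n r "\<lambda>\<delta>. c \<delta> - c' \<delta>" \<delta>])
    show "finite S" by (rule finS)
    show "\<And>\<delta> j. \<delta> \<in> S \<Longrightarrow> n \<le> j \<Longrightarrow> \<delta> j = 0" by (rule vanS)
    show "\<delta> \<in> S" by (rule that)
  next
    fix m :: "nat \<Rightarrow> nat"
    have "r dvd (E c (\<lambda>j. int (m j)) - f (\<lambda>j. int (m j))) - (E c' (\<lambda>j. int (m j)) - f (\<lambda>j. int (m j)))"
      using c1 c2 by (rule dvd_diff)
    then show "r dvd (\<Sum>\<delta>\<in>S. (c \<delta> - c' \<delta>) * (\<Prod>j<n. int_binom (int (m j)) (\<delta> j)))"
      unfolding E_def by (simp add: sum_subtractf left_diff_distrib)
  qed
  have deg: "\<sigma> \<delta> \<le> N" if d: "\<delta> \<in> supp" for \<delta>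
  proof (rule ccontr)
    assume "\<not> \<sigma> \<delta> \<le> N"
    then have big: "\<sigma> \<delta> > N" by simp
    have "r dvd c' \<delta>"
    proof (cases "\<delta> \<in> BN")
      case False then show ?thesis unfolding c'_def by simp
    next
      case True
      have "r dvd (\<Sum>a\<in>BQ. f (\<lambda>j. int (a j)) * (\<Prod>j<n. ss (q j) (a j) (\<delta> j)))"
      proof (intro dvd_sum dvd_mult)
        fix a
        show "r dvd (\<Prod>j<n. ss (q j) (a j) (\<delta> j))"
          unfolding r_def q_def
          by (rule mval[OF p a _ big[unfolded \<sigma>_def N]]) (use ss_val[OF p] a in auto)
      qed
      then show ?thesis unfolding c'_def using True by simp
    qed
    moreover have "\<delta> \<in> S" using d unfolding S_def by simp
    ultimately have "r dvd (c \<delta> - c' \<delta>) + c' \<delta>" using cong[of \<delta>] by (intro dvd_add)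
    then have "r dvd c \<delta>" by simp
    moreover have "0 < c \<delta>" "c \<delta> < r" using crange[of \<delta>] d unfolding supp_def by auto
    ultimately show False by (meson zdvd_imp_le not_le)
  qed
  show ?thesis
    unfolding pf_degree_def using deg fin unfolding supp_def \<sigma>_def by (subst Max_le_iff) auto
qed




lemma prod_01:
  assumes fin: "finite A"
  shows "(\<Prod>j\<in>A. (if P j then 1 else 0 :: int)) = (if \<forall>j\<in>A. P j then 1 else 0)"
proof (cases "\<forall>j\<in>A. P j")
  case True then show ?thesis by (simp add: prod.neutral)
next
  case False
  then obtain j where "j \<in> A" "\<not> P j" by blast
  then have "(\<Prod>j\<in>A. (if P j then 1 else 0 :: int)) = 0" using fin by (intro prod_zero) auto
  then show ?thesis using False by simp
qed

lemma sum_mod_mult: "(\<Sum>i\<in>A. (a i mod r) * b i) mod r = (\<Sum>i\<in>A. a i * b i) mod (r::int)"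
proof -
  have "(\<Sum>i\<in>A. (a i mod r) * b i) mod r = (\<Sum>i\<in>A. ((a i mod r) * b i) mod r) mod r"
    by (simp add: mod_sum_eq)
  also have "\<dots> = (\<Sum>i\<in>A. (a i * b i) mod r) mod r" by (simp add: mod_mult_left_eq)
  also have "\<dots> = (\<Sum>i\<in>A. a i * b i) mod r" by (simp add: mod_sum_eq)
  finally show ?thesis .
qed

lemma attain:
  fixes p \<beta> n N :: nat and \<alpha> :: "nat \<Rightarrow> nat"
  assumes p: "prime p" and b: "\<beta> \<ge> 1" and n: "n \<ge> 1" and a: "\<forall>j<n. \<alpha> j \<ge> 1"
  and N: "N = (\<Sum>j<n. p ^ \<alpha> j) - n + (\<beta> - 1) * (p - 1) * p ^ (Max (\<alpha> ` {..<n}) - 1)"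
  shows "\<exists>L. is_polyfract n (int p ^ \<beta>) L \<and>
              (\<forall>x. pf_eval n (int p ^ \<beta>) L x = lagrange_prod n (\<lambda>j. int p ^ \<alpha> j) x) \<and>
              pf_degree n L = N"
proof -
  define r where "r = int p ^ \<beta>"
  define q where "q j = p ^ \<alpha> j" for j
  define BN where "BN = Box n (\<lambda>_. N)"
  define \<sigma> where "\<sigma> \<delta> = (\<Sum>j<n. \<delta> j)" for \<delta> :: "nat \<Rightarrow> nat"
  define L where "L \<delta> = (if \<delta> \<in> BN then (\<Prod>j<n. ss (q j) 0 (\<delta> j)) mod r else 0)" for \<delta>
  have p1: "p > 1" using prime_gt_1_nat[OF p] by simp
  have r1: "r > 1"
  proof -
    have "1 < int p" using p1 by simp
    then show ?thesis unfolding r_def by (rule one_less_power) (use b in simp)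
  qed
  have q1: "q j \<ge> 1" for j unfolding q_def using p1 by simp
  have HNj: "j < n \<Longrightarrow> p^\<alpha> j - 1 + (\<beta>-1)*((p-1)*p^(\<alpha> j - 1)) \<le> N" for j
    unfolding N by (rule HN[OF p])
  have suppB: "{\<delta>. L \<delta> \<noteq> 0} \<subseteq> BN" unfolding L_def by auto
  have pc: "is_polyfract n r L"
    unfolding is_polyfract_def
  proof (intro conjI allI impI)
    fix \<delta> show "0 \<le> L \<delta>" "L \<delta> < r" unfolding L_def using r1 by auto
  next
    show "finite {\<delta>. L \<delta> \<noteq> 0}" using suppB finite_Box unfolding BN_def by (rule finite_subset)
  next
    fix \<delta> j assume "L \<delta> \<noteq> 0" "n \<le> j"
    then show "\<delta> j = 0" using suppB unfolding BN_def Box_def by auto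
  qed
  have ev: "pf_eval n r L x = lagrange_prod n (\<lambda>j. int p ^ \<alpha> j) x" for x
  proof -
    have "pf_eval n r L x = (\<Sum>\<delta>\<in>BN. L \<delta> * (\<Prod>j<n. int_binom (x j) (\<delta> j))) mod r"
      unfolding pf_eval_def
      by (rule arg_cong[where f="\<lambda>z. z mod r"], rule sum.mono_neutral_left)
         (use suppB finite_Box in \<open>auto simp: BN_def\<close>)
    also have "\<dots> = (\<Sum>\<delta>\<in>BN. (\<Prod>j<n. ss (q j) 0 (\<delta> j)) * (\<Prod>j<n. int_binom (x j) (\<delta> j))) mod r"
    proof -
      have "(\<Sum>\<delta>\<in>BN. L \<delta> * (\<Prod>j<n. int_binom (x j) (\<delta> j)))
          = (\<Sum>\<delta>\<in>BN. ((\<Prod>j<n. ss (q j) 0 (\<delta> j)) mod r) * (\<Prod>j<n. int_binom (x j) (\<delta> j)))"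
        unfolding L_def by (rule sum.cong) auto
      then show ?thesis by (simp only: sum_mod_mult)
    qed
    also have "\<dots> = (\<Prod>j<n. \<Sum>k\<le>N. ss (q j) 0 k * int_binom (x j) k) mod r"
    proof -
      have "(\<Sum>\<delta>\<in>BN. (\<Prod>j<n. ss (q j) 0 (\<delta> j)) * (\<Prod>j<n. int_binom (x j) (\<delta> j)))
          = (\<Sum>\<delta>\<in>BN. \<Prod>j<n. ss (q j) 0 (\<delta> j) * int_binom (x j) (\<delta> j))"
        by (simp add: prod.distrib)
      also have "\<dots> = (\<Prod>j<n. \<Sum>k\<le>N. ss (q j) 0 k * int_binom (x j) k)"
        unfolding BN_def by (rule BX)
      finally show ?thesis by simp
    qed
    also have "\<dots> = (\<Prod>j<n. hh (q j) 0 (x j)) mod r"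
    proof -
      have "r dvd (\<Prod>j<n. \<Sum>k\<le>N. ss (q j) 0 k * int_binom (x j) k) - (\<Prod>j<n. hh (q j) 0 (x j))"
      proof (rule prod_cong_dvd)
        fix j assume j: "j \<in> {..<n}"
        have "r dvd hh (q j) 0 (x j) - (\<Sum>k\<le>N. ss (q j) 0 k * int_binom (x j) k)"
          unfolding r_def q_def using ss_rep[OF p _ b HNj] a j by simp
        then show "r dvd (\<Sum>k\<le>N. ss (q j) 0 k * int_binom (x j) k) - hh (q j) 0 (x j)"
          by (simp add: dvd_diff_commute)
      qed simp
      then show ?thesis by (simp add: mod_eq_dvd_iff)
    qed
    also have "(\<Prod>j<n. hh (q j) 0 (x j)) = lagrange_prod n (\<lambda>j. int p ^ \<alpha> j) x"
      unfolding lagrange_prod_def hh_def q_def by simp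
    also have "lagrange_prod n (\<lambda>j. int p ^ \<alpha> j) x mod r = lagrange_prod n (\<lambda>j. int p ^ \<alpha> j) x"
      unfolding lagrange_prod_def prod_01[OF finite_lessThan] using r1 by simp
    finally show ?thesis .
  qed
  have degle: "\<sigma> \<delta> \<le> N" if d: "L \<delta> \<noteq> 0" for \<delta>
  proof (rule ccontr)
    assume "\<not> \<sigma> \<delta> \<le> N"
    then have big: "\<sigma> \<delta> > N" by simp
    have "r dvd (\<Prod>j<n. ss (q j) 0 (\<delta> j))"
      unfolding r_def q_def
      by (rule mval[OF p a _ big[unfolded \<sigma>_def N]]) (use ss_val[OF p] a in auto)
    then show False using d unfolding L_def by (auto split: if_splits)
  qed
  have "Max (\<alpha> ` {..<n}) \<in> \<alpha> ` {..<n}" using n by (intro Max_in) (auto simp: lessThan_empty_iff)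
  then obtain jm where jm: "jm < n" "\<alpha> jm = Max (\<alpha> ` {..<n})" by auto
  define \<phi> where "\<phi> j = (p-1)*p^(\<alpha> j - 1)" for j
  define ds where "ds j = (if j < n then (if j = jm then q j - 1 + (\<beta>-1)*\<phi> j else q j - 1) else 0)" for j
  have sig: "\<sigma> ds = N"
  proof -
    have "\<sigma> ds = (\<Sum>j<n. (q j - 1) + (if j = jm then (\<beta>-1)*\<phi> j else 0))"
      unfolding \<sigma>_def ds_def by (rule sum.cong) auto
    also have "\<dots> = (\<Sum>j<n. q j - 1) + (\<beta>-1)*\<phi> jm"
      using jm by (simp add: sum.distrib)
    also have "(\<Sum>j<n. q j - 1) = (\<Sum>j<n. q j) - n"
      using q1 by (simp add: sum_subtractf_nat)
    finally show ?thesis unfolding N q_def \<phi>_def using jm by (simp add: mult.assoc)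
  qed
  have dsB: "ds \<in> BN"
  proof -
    have "ds j \<le> N" if "j < n" for j
    proof -
      have "ds j \<le> \<sigma> ds" unfolding \<sigma>_def using that by (intro member_le_sum) auto
      then show ?thesis using sig by simp
    qed
    then show ?thesis unfolding BN_def Box_def ds_def by auto
  qed
  have ajm: "\<alpha> jm \<ge> 1" using a jm(1) by simp
  obtain u where u: "ss (q jm) 0 (q jm - 1 + (\<beta>-1) * \<phi> jm) = int p ^ (\<beta>-1) * u" "\<not> int p dvd u"
  proof -
    have "\<not> int p dvd ss (p^\<alpha> jm) 0 (p^\<alpha> jm - 1)"
    proof -
      have "ss (p^\<alpha> jm) 0 (p^\<alpha> jm - 1) = (-1)^(p^\<alpha> jm - 1)"
        using q1[of jm] unfolding q_def by (intro ss_small) simp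
      moreover have "\<not> int p dvd (-1)^k" for k using p1 by (cases "even k") auto
      ultimately show ?thesis by simp
    qed
    from exact_seq[OF p ajm ss_rec this, of "\<beta>-1"] q1[of jm]
    show ?thesis using that unfolding q_def \<phi>_def by auto
  qed
  define \<epsilon> where "\<epsilon> = (\<Prod>j\<in>{..<n} - {jm}. ss (q j) 0 (ds j))"
  have eps: "\<epsilon> * \<epsilon> = 1"
  proof -
    have "\<bar>\<epsilon>\<bar> = (\<Prod>j\<in>{..<n} - {jm}. \<bar>ss (q j) 0 (ds j)\<bar>)" unfolding \<epsilon>_def by (rule abs_prod)
    also have "\<dots> = 1"
    proof (rule prod.neutral, rule ballI)
      fix j assume j: "j \<in> {..<n} - {jm}"
      then have "ds j = q j - 1" unfolding ds_def by auto
      then have "ss (q j) 0 (ds j) = (-1)^(q j - 1)" using q1[of j] by (simp add: ss_small)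
      then show "\<bar>ss (q j) 0 (ds j)\<bar> = 1" by simp
    qed
    finally have "\<bar>\<epsilon>\<bar> = 1" .
    moreover have "\<epsilon> * \<epsilon> = \<bar>\<epsilon>\<bar> * \<bar>\<epsilon>\<bar>" by (simp only: abs_mult_self_eq)
    ultimately show ?thesis by simp
  qed
  have prodds: "(\<Prod>j<n. ss (q j) 0 (ds j)) = int p ^ (\<beta>-1) * (u * \<epsilon>)"
  proof -
    have "(\<Prod>j<n. ss (q j) 0 (ds j)) = ss (q jm) 0 (ds jm) * \<epsilon>"
      unfolding \<epsilon>_def using jm by (simp add: prod.remove)
    moreover have "ds jm = q jm - 1 + (\<beta>-1) * \<phi> jm" unfolding ds_def using jm by simp
    ultimately show ?thesis using u by simp
  qed
  have ndv: "\<not> r dvd (\<Prod>j<n. ss (q j) 0 (ds j))"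
  proof
    assume "r dvd (\<Prod>j<n. ss (q j) 0 (ds j))"
    moreover have "r = int p ^ (\<beta>-1) * int p" unfolding r_def using power_minus_mult[of \<beta> "int p"] b by simp
    ultimately have "int p ^ (\<beta>-1) * int p dvd int p ^ (\<beta>-1) * (u * \<epsilon>)"
      unfolding prodds by simp
    then have "int p dvd u * \<epsilon>" using p1 by simp
    then have "int p dvd u * \<epsilon> * \<epsilon>" by simp
    then have "int p dvd u" using eps by (simp add: mult.assoc)
    then show False using u by simp
  qed
  have Lds: "L ds \<noteq> 0" unfolding L_def using dsB ndv by (simp add: dvd_eq_mod_eq_0)
  have "pf_degree n L = N"
  proof -
    have fin: "finite {\<delta>. L \<delta> \<noteq> 0}" using suppB finite_Box unfolding BN_def by (rule finite_subset)
    have "Max (insert 0 (\<sigma> ` {\<delta>. L \<delta> \<noteq> 0})) = N"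
    proof (rule antisym)
      show "Max (insert 0 (\<sigma> ` {\<delta>. L \<delta> \<noteq> 0})) \<le> N" using fin degle by (subst Max_le_iff) auto
      show "N \<le> Max (insert 0 (\<sigma> ` {\<delta>. L \<delta> \<noteq> 0}))" using fin Lds sig
        by (intro Max_ge) (auto intro!: image_eqI[of N \<sigma> ds])
    qed
    then show ?thesis unfolding pf_degree_def \<sigma>_def .
  qed
  then show ?thesis using pc ev unfolding r_def by blast
qed



theorem theorem3p9:
  fixes p \<beta> n :: nat and \<alpha> :: "nat \<Rightarrow> nat"
  assumes "prime p" and "\<beta> \<ge> 1" and "n \<ge> 1" and "\<forall>j<n. \<alpha> j \<ge> 1"
  defines "bound \<equiv> (\<Sum>j<n. p ^ \<alpha> j) - n + (\<beta> - 1) * (p - 1) * p ^ (Max (\<alpha> ` {..<n}) - 1)"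
  shows "(\<forall>c. is_polyfract n (int p ^ \<beta>) c \<and>
              pf_periodic n (int p ^ \<beta>) (\<lambda>j. int p ^ \<alpha> j) c
              \<longrightarrow> pf_degree n c \<le> bound)
       \<and> (\<exists>L. is_polyfract n (int p ^ \<beta>) L \<and>
              (\<forall>x. pf_eval n (int p ^ \<beta>) L x = lagrange_prod n (\<lambda>j. int p ^ \<alpha> j) x) \<and>
              pf_degree n L = bound)"
proof -
  have bd: "bound = (\<Sum>j<n. p ^ \<alpha> j) - n + (\<beta> - 1) * (p - 1) * p ^ (Max (\<alpha> ` {..<n}) - 1)"
    unfolding bound_def ..
  show ?thesis
    using upper[OF assms(1) assms(2) assms(4) bd] attain[OF assms(1) assms(2) assms(3) assms(4) bd] by blast
qed

end
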